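(* Let $Q$ and $W$ satisfy the standing assumptions with $W=Y$, let $l\ge1$, and assume $Q$ is future unique w.r.t. $I^l_l$. Let $\mathcal R=\{(\zeta,V)\in\hat X^{I^l_l}\times\hat X^{l\triangledown}:V=\{\zeta\}\}$, $\mathcal R^l=\{(x,\hat x)\in X\times\hat X^{I^l_l}:\hat x\in E^{I^l_l}(x)\}$ and $\mathcal R^{l\triangledown}=\{(x,\hat x)\in X\times\hat X^{l\triangledown}:\hat x=E^{I^l_l}(x)\}$. Then: (i) $\mathcal B(\hat Q^{l\triangledown})=\hat{\mathcal B}^l$; (ii) $\mathcal R$ is a simulation relation from $\hat Q^{I^l_l}$ to $\hat Q^{l\triangledown}$ w.r.t. $Y$ and $\mathcal R^{-1}$ is a simulation relation from $\hat Q^{l\triangledown}$ to $\hat Q^{I^l_l}$ w.r.t. $Y$; (iii) $(\mathcal R^l)^{-1}$ is a simulation relation from $\hat Q^{I^l_l}$ to $Q$ w.r.t. $Y$ if and only if $(\mathcal R^{l\triangledown})^{-1}$ is a simulation relation from $\hat Q^{l\triangledown}$ to $Q$ w.r.t. $Y$; (iv) $Q$ is state-based asynchronously $l$-complete w.r.t. $I^l_l$ if and only if $\Phi^{l+1}=\Phi^l$.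
   Context: Strings and signals: $\diamond$ is a symbol not in any other set considered. For a set $A$ and $l\in\mathbb N_0$, $A^l$ is the set of strings of length $l$ over $A$, indexed $\zeta=\zeta(0)\cdots\zeta(l-1)$; $\lambda$ is the empty string and $\cdot$ denotes concatenation. For a map $w$ on $\mathbb Z$ (or a string) and integers $t_1\le t_2$, $w|_{[t_1,t_2]}=w(t_1)\cdots w(t_2)$ is the string of length $t_2-t_1+1$ (absolute time forgotten); if $t_2<t_1$ it is $\lambda$. For a set $\mathcal S$ of such maps or strings, $\mathcal S|_{[t_1,t_2]}=\{s|_{[t_1,t_2]}:s\in\mathcal S\}$. State machines: a state machine is $Q=(X,U,Y,\delta,X_0)$ with $X_0\subseteq X$, $\delta\subseteq X\times U\times Y\times X$. Let $H_\delta(x)=\{y:\exists u,x'.\,(x,u,y,x')\in\delta\}$, $F_\delta(x,u)=\{x':\exists y\in H_\delta(x).\,(x,u,y,x')\in\delta\}$, $T_\delta(x)=\bigcup_{u\in U}F_\delta(x,u)$. The full behavior $\mathcal B_f(Q)$ is the set of $(\mu,\nu,\xi)\in(U\times Y\times X)^{\mathbb N_0}$ with $\xi(0)\in X_0$ and $(\xi(k),\mu(k),\nu(k),\xi(k+1))\in\delta$ for all $k\in\mathbb N_0$. $Q$ is live and reachable if every $x\in X_0$ is $\xi(0)$ for some $(\mu,\nu,\xi)\in\mathcal B_f(Q)$ and every $x\in X$ is $\xi(k)$ for some such trajectory and some $k$. Standing assumptions: $Q=(X,U,Y,\delta,X_0)$ is live and reachable and satisfies $(x,u,y,x')\in\delta\iff(x'\in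 F_\delta(x,u)\wedge y\in H_\delta(x))$ for all $x,x'\in X,u\in U,y\in Y$; the external signal space $W$ is finite and either $W=U\times Y$ or $W=Y$ (here $W=Y$, with $\pi_W(u,y)=\pi_Y(u,y)=y$). Behaviors: for a state machine $Q'$ with input set $U$ and output set $Y$, $\mathcal B(Q')$ is the set of $w:\mathbb Z\to Y\cup\{\diamond\}$ such that for some $(\mu,\nu,\xi)\in\mathcal B_f(Q')$, $w(k)=\diamond$ for $k<0$ and $w(k)=\nu(k)$ for $k\ge0$. $\mathcal B_S(Q)$ is the set of pairs $(w,\xi)$ of maps on $\mathbb Z$ with $w(k)=\xi(k)=\diamond$ for $k<0$ and $(w(k),\xi(k))=(\nu(k),\xi'(k))$ for $k\ge0$, for some $(\mu,\nu,\xi')\in\mathcal B_f(Q)$. For a set $\mathcal B$ of maps on $\mathbb Z$, $\Pi_l(\mathcal B)=\bigcup_{k\in\mathbb N_0}\mathcal B|_{[k-l+1,k]}$. SAlCA: for $l\in\mathbb N_0$, $\hat{\mathcal B}^l$ is the set of $w:\mathbb Z\to W\cup\{\diamond\}$ with $w(k)=\diamond$ for $k<0$, $w(k)\in W$ for $k\ge0$, $w|_{[-l,0]}\in\mathcal B(Q)|_{[-l,0]}$ and $w|_{[k-l,k]}\in\Pi_{l+1}(\mathcal B(Q))$ for all $k\in\mathbb N_0$. Corresponding strings: for integers $a,b$ and $x\in X$, $E^{[a,b]}(x)=\{\zeta:\exists(w,\xi)\in\mathcal B_S(Q),k\in\mathbb N_0:\ \xi(k)=x,\ \zeta=w|_{[k+a,k+b]}\}$.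 For $l,m\in\mathbb N_0$ with $m\le l$, $I^l_m=[m-l,m-1]$; in particular $I^l_l=[0,l-1]$. Future uniqueness: $Q$ is future unique w.r.t. $I^l_m$ if for all $x\in X$ and $\zeta,\zeta'\in E^{I^l_m}(x)$, $\zeta|_{[l-m,l-1]}=\zeta'|_{[l-m,l-1]}$. State-based asynchronous $l$-completeness: $Q$ is state-based asynchronously $l$-complete w.r.t. $I^l_m$ if for all $x\in X$ and $\zeta\in\Pi_{l+1}(\mathcal B(Q))$, $\zeta|_{[0,l-1]}\in E^{I^l_m}(x)$ implies $\zeta\in E^{[m-l,m]}(x)$. Abstract state machine: $\hat Q^{I^l_m}=(\hat X^{I^l_m},U,Y,\hat\delta^{I^l_m},\hat X^{I^l_m}_0)$ with $\hat X^{I^l_m}=\bigcup_{x\in X}E^{I^l_m}(x)$, $\hat X^{I^l_m}_0=\bigcup_{x\in X_0}E^{I^l_m}(x)$, and $(\hat x,u,y,\hat x')\in\hat\delta^{I^l_m}$ iff (1) $\hat x'|_{[0,l-m-1]}=(\hat x|_{[0,l-m-1]}\cdot\pi_W(u,y))|_{[1,l-m]}$, (2) $\hat x|_{[l-m,l-1]}=(\pi_W(u,y)\cdot\hat x'|_{[l-m,l-2]})|_{[0,m-1]}$, and (3) there are $x,x'\in X$ with $\hat x\in E^{I^l_m}(x)$, $\hat x'\in E^{I^l_m}(x')$, $(x,u,y,x')\in\delta$. Quotient state machine (for $W=Y$): $\hat Q^{l\triangledown}=(\hat X^{l\triangledown},U,Y,\hat\delta^{l\triangledown},\hat X^{l\triangledown}_0)$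 with $\hat X^{l\triangledown}=\{E^{I^l_l}(x):x\in X\}$ (a set of subsets of $Y^l$), $\hat X^{l\triangledown}_0=\{E^{I^l_l}(x):x\in X_0\}$, and $(\hat x,u,y,\hat x')\in\hat\delta^{l\triangledown}$ iff there exist $x,x'\in X$ with $\hat x=E^{I^l_l}(x)$, $\hat x'=E^{I^l_l}(x')$ and $(x,u,y,x')\in\delta$. Partitions: for $\Xi\subseteq X$ let $T_\delta^{-1}(\Xi)=\{x\in X:T_\delta(x)\cap\Xi\neq\emptyset\}$ and for $V\subseteq Y$ let $H_\delta^{-1}(V)=\{x\in X:H_\delta(x)=V\}$. Set $\Phi^1=\{H_\delta^{-1}(V):V\subseteq Y\}\setminus\{\emptyset\}$ and, for $l\ge2$, let $\Phi^l$ be the partition of $X$ whose cells are the nonempty sets of the form $\Xi\cap\bigcap_{\Xi'\in\Phi^{l-1}}A_{\Xi'}$ with $\Xi\in\Phi^{l-1}$ and each $A_{\Xi'}\in\{T_\delta^{-1}(\Xi'),\,X\setminus T_\delta^{-1}(\Xi')\}$. Simulation relations: for state machines $Q_i=(X_i,U,Y,\delta_i,X_{0,i})$, $i=1,2$, and $V\in\{U\times Y,Y\}$, a relation $\mathcal R\subseteq X_1\times X_2$ is a simulation relation from $Q_1$ to $Q_2$ w.r.t. $V$ if (a) for every $x_1\in X_{0,1}$ there is $x_2\in X_{0,2}$ with $(x_1,x_2)\in\mathcal R$, and (b) for all $(x_1,x_2)\in\mathcal R$ and $(x_1,u_1,y_1,x_1')\in\delta_1$ there exist $u_2,y_2,x_2'$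 with $(x_2,u_2,y_2,x_2')\in\delta_2$, $(x_1',x_2')\in\mathcal R$ and $\pi_V(u_1,y_1)=\pi_V(u_2,y_2)$. $\mathcal R^{-1}=\{(x_2,x_1):(x_1,x_2)\in\mathcal R\}$. *)

theory Defs
  imports Main
begin

text \<open>State machine Q = (X,U,Y,delta,X0). The symbol diamond is modelled by None,
  a signal value w in W is modelled by Some w. Strings are lists.\<close>

record ('x,'u,'y) sm =
  Xs  :: "'x set"
  Us  :: "'u set"
  Ys  :: "'y set"
  dlt :: "('x \<times> 'u \<times> 'y \<times> 'x) set"
  X0s :: "'x set"

definition wf_sm :: "('x,'u,'y) sm \<Rightarrow> bool" where
  "wf_sm Q \<longleftrightarrow> X0s Q \<subseteq> Xs Q \<and> dlt Q \<subseteq> Xs Q \<times> Us Q \<times> Ys Q \<times> Xs Q"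

definition Hd :: "('x,'u,'y) sm \<Rightarrow> 'x \<Rightarrow> 'y set" where
  "Hd Q x = {y. \<exists>u x'. (x,u,y,x') \<in> dlt Q}"

definition Fd :: "('x,'u,'y) sm \<Rightarrow> 'x \<Rightarrow> 'u \<Rightarrow> 'x set" where
  "Fd Q x u = {x'. \<exists>y \<in> Hd Q x. (x,u,y,x') \<in> dlt Q}"

definition Td :: "('x,'u,'y) sm \<Rightarrow> 'x \<Rightarrow> 'x set" where
  "Td Q x = (\<Union>u \<in> Us Q. Fd Q x u)"

definition full_beh :: "('x,'u,'y) sm \<Rightarrow> ((nat \<Rightarrow> 'u) \<times> (nat \<Rightarrow> 'y) \<times> (nat \<Rightarrow> 'x)) set" where
  "full_beh Q = {(mu,nu,xi). (\<forall>k. mu k \<in> Us Q \<and> nu k \<in> Ys Q \<and> xi k \<in> Xs Q) \<and>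
      xi 0 \<in> X0s Q \<and> (\<forall>k. (xi k, mu k, nu k, xi (Suc k)) \<in> dlt Q)}"

definition live_reachable :: "('x,'u,'y) sm \<Rightarrow> bool" where
  "live_reachable Q \<longleftrightarrow>
     (\<forall>x \<in> X0s Q. \<exists>(mu,nu,xi) \<in> full_beh Q. xi 0 = x) \<and>
     (\<forall>x \<in> Xs Q. \<exists>(mu,nu,xi) \<in> full_beh Q. \<exists>k. xi k = x)"

definition standing :: "('x,'u,'y) sm \<Rightarrow> bool" where
  "standing Q \<longleftrightarrow> wf_sm Q \<and> live_reachable Q \<and> finite (Ys Q) \<and>
     (\<forall>x \<in> Xs Q. \<forall>u \<in> Us Q. \<forall>y \<in> Ys Q. \<forall>x' \<in> Xs Q.
        (x,u,y,x') \<in> dlt Q \<longleftrightarrow> (x' \<in> Fd Q x u \<and> y \<in> Hd Q x))"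

text \<open>Restriction w|[t1,t2] of a map on Z (empty if t2 < t1).\<close>
definition restr :: "(int \<Rightarrow> 'a) \<Rightarrow> int \<Rightarrow> int \<Rightarrow> 'a list" where
  "restr w t1 t2 = map (\<lambda>i. w (t1 + int i)) [0..<nat (t2 - t1 + 1)]"

text \<open>Restriction of a string zeta|[a,b] (empty if b < a).\<close>
definition sres :: "'a list \<Rightarrow> int \<Rightarrow> int \<Rightarrow> 'a list" where
  "sres zs a b = map (\<lambda>i. zs ! nat (a + int i)) [0..<nat (b - a + 1)]"

definition beh :: "('x,'u,'y) sm \<Rightarrow> (int \<Rightarrow> 'y option) set" where
  "beh Q = {w. \<exists>(mu,nu,xi) \<in> full_beh Q.
              (\<forall>k<0. w k = None) \<and> (\<forall>k\<ge>0. w k = Some (nu (nat k)))}"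

definition behS :: "('x,'u,'y) sm \<Rightarrow> ((int \<Rightarrow> 'y option) \<times> (int \<Rightarrow> 'x option)) set" where
  "behS Q = {(w,xi). \<exists>(mu,nu,xi') \<in> full_beh Q.
       (\<forall>k<0. w k = None \<and> xi k = None) \<and>
       (\<forall>k\<ge>0. w k = Some (nu (nat k)) \<and> xi k = Some (xi' (nat k)))}"

definition Pi_l :: "nat \<Rightarrow> (int \<Rightarrow> 'a) set \<Rightarrow> 'a list set" where
  "Pi_l l B = (\<Union>k::nat. (\<lambda>w. restr w (int k - int l + 1) (int k)) ` B)"

definition salca :: "('x,'u,'y) sm \<Rightarrow> nat \<Rightarrow> (int \<Rightarrow> 'y option) set" where
  "salca Q l = {w. (\<forall>k<0. w k = None) \<and> (\<forall>k\<ge>0. w k \<in> Some ` Ys Q) \<and>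
      restr w (- int l) 0 \<in> (\<lambda>v. restr v (- int l) 0) ` beh Q \<and>
      (\<forall>k\<ge>0. restr w (k - int l) k \<in> Pi_l (Suc l) (beh Q))}"

definition Ecs :: "('x,'u,'y) sm \<Rightarrow> int \<Rightarrow> int \<Rightarrow> 'x \<Rightarrow> 'y option list set" where
  "Ecs Q a b x = {zeta. \<exists>w xi k. (w,xi) \<in> behS Q \<and> xi (int k) = Some x \<and>
                     zeta = restr w (int k + a) (int k + b)}"

text \<open>E^{I^l_m}(x) with I^l_m = [m-l, m-1].\<close>
definition EI :: "('x,'u,'y) sm \<Rightarrow> nat \<Rightarrow> nat \<Rightarrow> 'x \<Rightarrow> 'y option list set" where
  "EI Q l m x = Ecs Q (int m - int l) (int m - 1) x"

definition future_unique :: "('x,'u,'y) sm \<Rightarrow> nat \<Rightarrow> nat \<Rightarrow> bool" where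
  "future_unique Q l m \<longleftrightarrow> (\<forall>x \<in> Xs Q. \<forall>zeta \<in> EI Q l m x. \<forall>zeta' \<in> EI Q l m x.
      sres zeta (int l - int m) (int l - 1) = sres zeta' (int l - int m) (int l - 1))"

definition async_complete :: "('x,'u,'y) sm \<Rightarrow> nat \<Rightarrow> nat \<Rightarrow> bool" where
  "async_complete Q l m \<longleftrightarrow> (\<forall>x \<in> Xs Q. \<forall>zeta \<in> Pi_l (Suc l) (beh Q).
      sres zeta 0 (int l - 1) \<in> EI Q l m x \<longrightarrow> zeta \<in> Ecs Q (int m - int l) (int m) x)"

text \<open>Abstract state machine hat Q^{I^l_m} (W = Y, so pi_W(u,y) = y).\<close>
definition absQ :: "('x,'u,'y) sm \<Rightarrow> nat \<Rightarrow> nat \<Rightarrow> ('y option list,'u,'y) sm" where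
  "absQ Q l m = \<lparr> Xs = (\<Union>x \<in> Xs Q. EI Q l m x), Us = Us Q, Ys = Ys Q,
     dlt = {(xh,u,y,xh').
        sres xh' 0 (int l - int m - 1) = sres (sres xh 0 (int l - int m - 1) @ [Some y]) 1 (int l - int m) \<and>
        sres xh (int l - int m) (int l - 1) = sres ([Some y] @ sres xh' (int l - int m) (int l - 2)) 0 (int m - 1) \<and>
        (\<exists>x x'. xh \<in> EI Q l m x \<and> xh' \<in> EI Q l m x' \<and> (x,u,y,x') \<in> dlt Q)},
     X0s = (\<Union>x \<in> X0s Q. EI Q l m x) \<rparr>"

definition quotQ :: "('x,'u,'y) sm \<Rightarrow> nat \<Rightarrow> ('y option list set,'u,'y) sm" where
  "quotQ Q l = \<lparr> Xs = {EI Q l l x | x. x \<in> Xs Q}, Us = Us Q, Ys = Ys Q,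
     dlt = {(xh,u,y,xh'). \<exists>x x'. xh = EI Q l l x \<and> xh' = EI Q l l x' \<and> (x,u,y,x') \<in> dlt Q},
     X0s = {EI Q l l x | x. x \<in> X0s Q} \<rparr>"

text \<open>Partitions Phi^l (only meaningful for l >= 1).\<close>
definition Tinv :: "('x,'u,'y) sm \<Rightarrow> 'x set \<Rightarrow> 'x set" where
  "Tinv Q Xi = {x \<in> Xs Q. Td Q x \<inter> Xi \<noteq> {}}"

definition Hinv :: "('x,'u,'y) sm \<Rightarrow> 'y set \<Rightarrow> 'x set" where
  "Hinv Q V = {x \<in> Xs Q. Hd Q x = V}"

definition phi_step :: "('x,'u,'y) sm \<Rightarrow> 'x set set \<Rightarrow> 'x set set" where
  "phi_step Q P = {C. C \<noteq> {} \<and> (\<exists>Xi \<in> P. \<exists>A.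
       (\<forall>Xi' \<in> P. A Xi' = Tinv Q Xi' \<or> A Xi' = Xs Q - Tinv Q Xi') \<and>
       C = Xi \<inter> (\<Inter>Xi' \<in> P. A Xi'))}"

fun Phi :: "('x,'u,'y) sm \<Rightarrow> nat \<Rightarrow> 'x set set" where
  "Phi Q 0 = {}"
| "Phi Q (Suc 0) = {Hinv Q V | V. V \<subseteq> Ys Q} - {{}}"
| "Phi Q (Suc (Suc n)) = phi_step Q (Phi Q (Suc n))"

definition simrel :: "('u \<times> 'y \<Rightarrow> 'v) \<Rightarrow> ('a,'u,'y) sm \<Rightarrow> ('b,'u,'y) sm \<Rightarrow> ('a \<times> 'b) set \<Rightarrow> bool" where
  "simrel piV Q1 Q2 R \<longleftrightarrow>
     (\<forall>x1 \<in> X0s Q1. \<exists>x2 \<in> X0s Q2. (x1,x2) \<in> R) \<and>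
     (\<forall>(x1,x2) \<in> R. \<forall>u1 y1 x1'. (x1,u1,y1,x1') \<in> dlt Q1 \<longrightarrow>
        (\<exists>u2 y2 x2'. (x2,u2,y2,x2') \<in> dlt Q2 \<and> (x1',x2') \<in> R \<and> piV (u1,y1) = piV (u2,y2)))"

definition piY :: "'u \<times> 'y \<Rightarrow> 'y" where "piY p = snd p"

end

theory Submission
  imports Defs
begin


definition wof :: "(nat \<Rightarrow> 'y) \<Rightarrow> int \<Rightarrow> 'y option" where
 "wof nu k = (if k < 0 then None else Some (nu (nat k)))"
definition str :: "(nat \<Rightarrow> 'y) \<Rightarrow> nat \<Rightarrow> nat \<Rightarrow> 'y option list" where
 "str nu k n = map (\<lambda>i. Some (nu (k+i))) [0..<n]"

lemma length_restr[simp]: "length (restr w a b) = nat (b - a + 1)" by (simp add: restr_def)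
lemma nth_restr: "i < nat (b-a+1) \<Longrightarrow> restr w a b ! i = w (a + int i)" by (simp add: restr_def)
lemma restr_cong: "(\<And>i. i < nat (b-a+1) \<Longrightarrow> w (a + int i) = v (a + int i)) \<Longrightarrow> restr w a b = restr v a b"
  by (simp add: restr_def)
lemma length_str[simp]: "length (str nu k n) = n" by (simp add: str_def)
lemma nth_str[simp]: "i < n \<Longrightarrow> str nu k n ! i = Some (nu (k+i))" by (simp add: str_def)
lemma restr_wof_str: "restr (wof nu) (int k) (int k + b) = str nu k (nat (b+1))"
  by (rule nth_equalityI) (auto simp: nth_restr wof_def nat_add_distrib)
lemma restr_wof_str2: "l \<le> j \<Longrightarrow> restr (wof nu) (int j - int l) (int j) = str nu (j-l) (Suc l)"
proof -
  assume "l \<le> j"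
  then have e: "int j - int l = int (j-l)" "int j = int (j - l) + int l" by auto
  show ?thesis unfolding e using restr_wof_str[of nu "j-l" "int l"] by (simp add: nat_add_distrib)
qed
lemma sres_take: "nat (b+1) \<le> length zs \<Longrightarrow> sres zs 0 b = take (nat (b+1)) zs"
  by (rule nth_equalityI) (auto simp: sres_def)
lemma str_Suc: "str nu k (Suc n) = Some (nu k) # str nu (Suc k) n"
  by (rule nth_equalityI) (auto simp: nth_Cons split: nat.split)
lemma take_str: "m \<le> n \<Longrightarrow> take m (str nu k n) = str nu k m"
  by (rule nth_equalityI) auto

lemma beh_iff: "w \<in> beh Q \<longleftrightarrow> (\<exists>mu nu xi. (mu,nu,xi) \<in> full_beh Q \<and> w = wof nu)"
proof
  assume "w \<in> beh Q"
  then obtain mu nu xi where t: "(mu,nu,xi) \<in> full_beh Q" and a: "\<forall>k<0. w k = None"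
    and b: "\<forall>k\<ge>0. w k = Some (nu (nat k))" unfolding beh_def by auto
  have "w = wof nu" using a b by (auto simp: wof_def fun_eq_iff)
  then show "\<exists>mu nu xi. (mu,nu,xi) \<in> full_beh Q \<and> w = wof nu" using t by blast
next
  assume "\<exists>mu nu xi. (mu,nu,xi) \<in> full_beh Q \<and> w = wof nu"
  then show "w \<in> beh Q" unfolding beh_def by (force simp: wof_def)
qed

lemma Ecs0_char: "Ecs Q 0 b x = {z. \<exists>mu nu xi k. (mu,nu,xi) \<in> full_beh Q \<and> xi k = x \<and> z = str nu k (nat (b+1))}"
proof safe
  fix z assume "z \<in> Ecs Q 0 b x"
  then obtain w xi k where bs: "(w,xi) \<in> behS Q" and xk: "xi (int k) = Some x" and z: "z = restr w (int k + 0) (int k + b)"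
    unfolding Ecs_def by blast
  from bs obtain mu nu xi' where t: "(mu,nu,xi') \<in> full_beh Q" and a: "\<forall>k<0. w k = None \<and> xi k = None"
    and c: "\<forall>k\<ge>0. w k = Some (nu (nat k)) \<and> xi k = Some (xi' (nat k))" unfolding behS_def by auto
  have "w = wof nu" using a c by (auto simp: wof_def fun_eq_iff)
  moreover have "xi' k = x" using c xk by (metis nat_int of_nat_0_le_iff option.inject)
  ultimately show "\<exists>mu nu xi k. (mu,nu,xi) \<in> full_beh Q \<and> xi k = x \<and> z = str nu k (nat (b+1))"
    using t z restr_wof_str[of nu k b] by auto
next
  fix mu nu xi k assume t: "(mu,nu,xi) \<in> full_beh Q"
  let ?xi = "\<lambda>k. if k < 0 then None else Some (xi (nat k))"
  have "(wof nu, ?xi) \<in> behS Q" unfolding behS_def using t by (force simp: wof_def)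
  moreover have "?xi (int k) = Some (xi k)" by simp
  ultimately show "str nu k (nat (b+1)) \<in> Ecs Q 0 b (xi k)"
    unfolding Ecs_def using restr_wof_str[of nu k b] by force
qed




locale P12 = fixes Q :: "('x,'u,'y) sm" and l :: nat
  assumes st: "standing Q" and l1: "l \<ge> 1" and fu: "future_unique Q l l"
begin

lemma wf: "wf_sm Q" and lr: "live_reachable Q"
  using st unfolding standing_def by auto

lemma traj_in: "(mu,nu,xi) \<in> full_beh Q \<Longrightarrow> xi k \<in> Xs Q \<and> mu k \<in> Us Q \<and> nu k \<in> Ys Q \<and>
   (xi k, mu k, nu k, xi (Suc k)) \<in> dlt Q \<and> xi 0 \<in> X0s Q"
  unfolding full_beh_def by auto

lemma reach: "x \<in> Xs Q \<Longrightarrow> \<exists>mu nu xi k. (mu,nu,xi)\<in>full_beh Q \<and> xi k = x"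
  using lr unfolding live_reachable_def by fast

lemma live0: "x \<in> X0s Q \<Longrightarrow> \<exists>mu nu xi. (mu,nu,xi)\<in>full_beh Q \<and> xi 0 = x"
  using lr unfolding live_reachable_def by fast

lemma dlt_in: "(x,u,y,x') \<in> dlt Q \<Longrightarrow> x \<in> Xs Q \<and> u \<in> Us Q \<and> y \<in> Ys Q \<and> x' \<in> Xs Q"
  using wf unfolding wf_sm_def by auto

lemma X0_sub: "X0s Q \<subseteq> Xs Q" using wf unfolding wf_sm_def by auto

lemma splice: assumes d: "(x,u,y,x') \<in> dlt Q"
  shows "\<exists>mu nu xi k. (mu,nu,xi)\<in>full_beh Q \<and> xi k = x \<and> mu k = u \<and> nu k = y \<and> xi (Suc k) = x'"
proof -
  have xX: "x \<in> Xs Q" and xX': "x' \<in> Xs Q" using dlt_in[OF d] by auto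
  obtain m1 n1 s1 k1 where t1: "(m1,n1,s1) \<in> full_beh Q" and k1: "s1 k1 = x"
    using reach[OF xX] by blast
  obtain m2 n2 s2 k2 where t2: "(m2,n2,s2) \<in> full_beh Q" and k2: "s2 k2 = x'"
    using reach[OF xX'] by blast
  define g where "g j = j - Suc k1 + k2" for j
  define s where "s j = (if j \<le> k1 then s1 j else s2 (g j))" for j
  define m where "m j = (if j < k1 then m1 j else if j = k1 then u else m2 (g j))" for j
  define n where "n j = (if j < k1 then n1 j else if j = k1 then y else n2 (g j))" for j
  have "(m,n,s) \<in> full_beh Q"
    unfolding full_beh_def
  proof (clarify, intro conjI allI)
    fix j
    have a1: "m1 j \<in> Us Q" "n1 j \<in> Ys Q" "s1 j \<in> Xs Q" using traj_in[OF t1, of j] by auto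
    have a2: "m2 (g j) \<in> Us Q" "n2 (g j) \<in> Ys Q" "s2 (g j) \<in> Xs Q"
      using traj_in[OF t2, of "g j"] by auto
    have a3: "u \<in> Us Q" "y \<in> Ys Q" using dlt_in[OF d] by auto
    show "m j \<in> Us Q" using a1 a2 a3 by (simp add: m_def)
    show "n j \<in> Ys Q" using a1 a2 a3 by (simp add: n_def)
    show "s j \<in> Xs Q" using a1 a2 a3 by (simp add: s_def)
    show "s 0 \<in> X0s Q" using traj_in[OF t1] by (simp add: s_def)
    show "(s j, m j, n j, s (Suc j)) \<in> dlt Q"
    proof (cases "j < k1")
      case True then show ?thesis using traj_in[OF t1, of j] by (simp add: m_def n_def s_def)
    next
      case False
      show ?thesis
      proof (cases "j = k1")
        case True
        have "g (Suc k1) = k2" by (simp add: g_def)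
        then show ?thesis using d k1 k2 True by (simp add: m_def n_def s_def)
      next
        case False
        with \<open>\<not> j < k1\<close> have "k1 < j" by simp
        then have "g (Suc j) = Suc (g j)" by (simp add: g_def)
        then show ?thesis using traj_in[OF t2, of "g j"] \<open>k1 < j\<close>
          by (simp add: m_def n_def s_def)
      qed
    qed
  qed
  moreover have "s k1 = x" "m k1 = u" "n k1 = y" "s (Suc k1) = x'" using k1 k2 by (auto simp: s_def m_def n_def g_def)
  ultimately show ?thesis by (intro exI[of _ m] exI[of _ n] exI[of _ s] exI[of _ k1]) simp
qed

lemma EI_char: "EI Q l l x = {z. \<exists>mu nu xi k. (mu,nu,xi)\<in>full_beh Q \<and> xi k = x \<and> z = str nu k l}"
proof -
  have "nat (int l - 1 + 1) = l" by simp
  then show ?thesis unfolding EI_def by (simp add: Ecs0_char)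
qed

lemma EI_uniq: assumes x: "x \<in> Xs Q" and z: "z \<in> EI Q l l x" and z': "z' \<in> EI Q l l x" shows "z = z'"
proof -
  have "sres z (int l - int l) (int l - 1) = sres z' (int l - int l) (int l - 1)"
    using fu x z z' unfolding future_unique_def by blast
  moreover have "length z = l" "length z' = l" using z z' by (auto simp: EI_char)
  moreover have "nat (int l - 1 + 1) = l" by simp
  ultimately show ?thesis using sres_take[of "int l - 1" z] sres_take[of "int l - 1" z'] by simp
qed

definition zx where "zx x = (THE z. z \<in> EI Q l l x)"

lemma str_EI: "(mu,nu,xi)\<in>full_beh Q \<Longrightarrow> str nu k l \<in> EI Q l l (xi k)"
  by (auto simp: EI_char)

lemma zx_traj: assumes t: "(mu,nu,xi)\<in>full_beh Q" shows "zx (xi k) = str nu k l"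
  unfolding zx_def
proof (rule the_equality)
  show "str nu k l \<in> EI Q l l (xi k)" by (rule str_EI[OF t])
  fix z assume "z \<in> EI Q l l (xi k)"
  then show "z = str nu k l" using EI_uniq[of "xi k" z "str nu k l"] traj_in[OF t, of k] str_EI[OF t, of k] by blast
qed

lemma EI_single: assumes x: "x \<in> Xs Q" shows "EI Q l l x = {zx x}"
proof -
  obtain mu nu xi k where t: "(mu,nu,xi)\<in>full_beh Q" and k: "xi k = x" using reach[OF x] by blast
  have a: "str nu k l \<in> EI Q l l x" "zx x = str nu k l" using str_EI[OF t, of k] zx_traj[OF t, of k] k by auto
  show ?thesis
  proof
    show "{zx x} \<subseteq> EI Q l l x" using a by simp
    show "EI Q l l x \<subseteq> {zx x}"
    proof
      fix z assume "z \<in> EI Q l l x"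
      then have "z = str nu k l" using a(1) by (rule EI_uniq[OF x])
      then show "z \<in> {zx x}" using a(2) by simp
    qed
  qed
qed

lemma EI_iff: "x \<in> Xs Q \<Longrightarrow> z \<in> EI Q l l x \<longleftrightarrow> z = zx x" by (simp add: EI_single)

lemma zx_len: assumes x: "x \<in> Xs Q" shows "length (zx x) = l"
proof -
  obtain mu nu xi k where t: "(mu,nu,xi)\<in>full_beh Q" and k: "xi k = x" using reach[OF x] by blast
  show ?thesis using zx_traj[OF t, of k] k by simp
qed

lemma trans_zx: assumes d: "(x,u,y,x') \<in> dlt Q" shows "zx x = Some y # take (l-1) (zx x')"
proof -
  obtain mu nu xi k where t: "(mu,nu,xi)\<in>full_beh Q" and h: "xi k = x" "mu k = u" "nu k = y" "xi (Suc k) = x'"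
    using splice[OF d] by blast
  have l: "l = Suc (l-1)" using l1 by simp
  have "zx x = str nu k l" using zx_traj[OF t, of k] h by simp
  also have "\<dots> = Some y # str nu (Suc k) (l-1)" by (subst l, simp add: str_Suc h)
  also have "str nu (Suc k) (l-1) = take (l-1) (zx x')" using zx_traj[OF t, of "Suc k"] h by (simp add: take_str)
  finally show ?thesis .
qed

lemma hd_zx: "(x,u,y,x') \<in> dlt Q \<Longrightarrow> hd (zx x) = Some y" using trans_zx by simp

lemma Td_char: "Td Q x = {z. \<exists>u y. (x,u,y,z) \<in> dlt Q}"
proof
  show "Td Q x \<subseteq> {z. \<exists>u y. (x,u,y,z) \<in> dlt Q}" unfolding Td_def Fd_def by blast
  show "{z. \<exists>u y. (x,u,y,z) \<in> dlt Q} \<subseteq> Td Q x"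
  proof
    fix z assume "z \<in> {z. \<exists>u y. (x,u,y,z) \<in> dlt Q}"
    then obtain u y where d: "(x,u,y,z) \<in> dlt Q" by blast
    then have "u \<in> Us Q" using dlt_in by blast
    moreover have "y \<in> Hd Q x" using d unfolding Hd_def by blast
    ultimately show "z \<in> Td Q x" using d unfolding Td_def Fd_def by blast
  qed
qed

lemma Hd_single: assumes x: "x \<in> Xs Q" shows "\<exists>y. Hd Q x = {y} \<and> hd (zx x) = Some y"
proof -
  obtain mu nu xi k where t: "(mu,nu,xi)\<in>full_beh Q" and k: "xi k = x" using reach[OF x] by blast
  have d: "(x, mu k, nu k, xi (Suc k)) \<in> dlt Q" using traj_in[OF t] k by auto
  have "Hd Q x = {nu k}"
  proof
    show "{nu k} \<subseteq> Hd Q x" using d unfolding Hd_def by blast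
    show "Hd Q x \<subseteq> {nu k}"
    proof
      fix y assume "y \<in> Hd Q x"
      then obtain u x' where "(x,u,y,x') \<in> dlt Q" unfolding Hd_def by blast
      then have "hd (zx x) = Some y" by (rule hd_zx)
      moreover have "hd (zx x) = Some (nu k)" using d by (rule hd_zx)
      ultimately show "y \<in> {nu k}" by simp
    qed
  qed
  then show ?thesis using hd_zx[OF d] by blast
qed

end



context P12 begin

lemma absX: "Xs (absQ Q l l) = zx ` Xs Q"
  by (auto simp: absQ_def EI_single)

lemma absX0: "X0s (absQ Q l l) = zx ` X0s Q"
proof -
  have "\<And>x. x \<in> X0s Q \<Longrightarrow> EI Q l l x = {zx x}" using X0_sub EI_single by blast
  then show ?thesis by (auto simp: absQ_def)
qed

lemma quotX: "Xs (quotQ Q l) = (\<lambda>x. {zx x}) ` Xs Q"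
proof -
  have "Xs (quotQ Q l) = (\<lambda>x. EI Q l l x) ` Xs Q" by (auto simp: quotQ_def)
  also have "\<dots> = (\<lambda>x. {zx x}) ` Xs Q" by (rule image_cong) (simp_all add: EI_single)
  finally show ?thesis .
qed

lemma quotX0: "X0s (quotQ Q l) = (\<lambda>x. {zx x}) ` X0s Q"
proof -
  have "\<And>x. x \<in> X0s Q \<Longrightarrow> EI Q l l x = {zx x}" using X0_sub EI_single by blast
  then show ?thesis by (auto simp: quotQ_def)
qed

lemma quot_dlt: "(V,u,y,V') \<in> dlt (quotQ Q l) \<longleftrightarrow> (\<exists>x x'. V = {zx x} \<and> V' = {zx x'} \<and> (x,u,y,x') \<in> dlt Q)"
proof
  assume "(V,u,y,V') \<in> dlt (quotQ Q l)"
  then obtain x x' where h: "V = EI Q l l x" "V' = EI Q l l x'" "(x,u,y,x') \<in> dlt Q"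
    by (auto simp: quotQ_def)
  then have "x \<in> Xs Q" "x' \<in> Xs Q" using dlt_in by auto
  then show "\<exists>x x'. V = {zx x} \<and> V' = {zx x'} \<and> (x,u,y,x') \<in> dlt Q" using h EI_single by metis
next
  assume "\<exists>x x'. V = {zx x} \<and> V' = {zx x'} \<and> (x,u,y,x') \<in> dlt Q"
  then obtain x x' where h: "V = {zx x}" "V' = {zx x'}" "(x,u,y,x') \<in> dlt Q" by blast
  then have "x \<in> Xs Q" "x' \<in> Xs Q" using dlt_in by auto
  then have "V = EI Q l l x" "V' = EI Q l l x'" using h EI_single by auto
  then show "(V,u,y,V') \<in> dlt (quotQ Q l)" using h(3) by (auto simp: quotQ_def)
qed

lemma abs_dlt: "(z,u,y,z') \<in> dlt (absQ Q l l) \<longleftrightarrow> (\<exists>x x'. z = zx x \<and> z' = zx x' \<and> (x,u,y,x') \<in> dlt Q)"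
proof
  assume "(z,u,y,z') \<in> dlt (absQ Q l l)"
  then obtain x x' where h: "z \<in> EI Q l l x" "z' \<in> EI Q l l x'" "(x,u,y,x') \<in> dlt Q"
    by (auto simp: absQ_def)
  then have "x \<in> Xs Q" "x' \<in> Xs Q" using dlt_in by auto
  then show "\<exists>x x'. z = zx x \<and> z' = zx x' \<and> (x,u,y,x') \<in> dlt Q" using h EI_iff by metis
next
  assume "\<exists>x x'. z = zx x \<and> z' = zx x' \<and> (x,u,y,x') \<in> dlt Q"
  then obtain x x' where h: "z = zx x" "z' = zx x'" and d: "(x,u,y,x') \<in> dlt Q" by blast
  then have X: "x \<in> Xs Q" "x' \<in> Xs Q" using dlt_in by auto
  then have e: "z \<in> EI Q l l x" "z' \<in> EI Q l l x'" using h EI_iff by auto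
  have len: "length z = l" "length z' = l" using h X zx_len by auto
  have c1: "sres z' 0 (int l - int l - 1) = sres (sres z 0 (int l - int l - 1) @ [Some y]) 1 (int l - int l)"
    by (simp add: sres_def)
  have n1: "nat (int l - 1 + 1) = l" by simp
  have n2: "nat (int l - 2 + 1) = l - 1" using l1 by simp
  have "sres z 0 (int l - 1) = z" using sres_take[of "int l - 1" z] len n1 by simp
  moreover have "sres z' 0 (int l - 2) = take (l-1) z'" using sres_take[of "int l - 2" z'] len n2 by simp
  moreover have "sres (Some y # take (l-1) z') 0 (int l - 1) = Some y # take (l-1) z'"
    using sres_take[of "int l - 1" "Some y # take (l-1) z'"] len n1 l1 by simp
  moreover have "z = Some y # take (l-1) z'" using trans_zx[OF d] h by simp
  ultimately have c2: "sres z (int l - int l) (int l - 1) = sres ([Some y] @ sres z' (int l - int l) (int l - 2)) 0 (int l - 1)"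
    by simp
  show "(z,u,y,z') \<in> dlt (absQ Q l l)" unfolding absQ_def using c1 c2 e d by auto
qed

definition RR where "RR = {(zeta,V). zeta \<in> Xs (absQ Q l l) \<and> V \<in> Xs (quotQ Q l) \<and> V = {zeta}}"

lemma RR_I: "x \<in> Xs Q \<Longrightarrow> (zx x, {zx x}) \<in> RR"
  unfolding RR_def absX quotX by blast

lemma RR_E: "(z,V) \<in> RR \<Longrightarrow> \<exists>x\<in>Xs Q. z = zx x \<and> V = {zx x}"
  unfolding RR_def absX quotX by blast

lemma part2a: "simrel piY (absQ Q l l) (quotQ Q l) RR"
  unfolding simrel_def
proof (intro conjI ballI)
  fix x1 assume "x1 \<in> X0s (absQ Q l l)"
  then obtain x where x: "x \<in> X0s Q" "x1 = zx x" unfolding absX0 by blast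
  then have "{zx x} \<in> X0s (quotQ Q l)" unfolding quotX0 by blast
  moreover have "(x1, {zx x}) \<in> RR" using RR_I x X0_sub by blast
  ultimately show "\<exists>x2\<in>X0s (quotQ Q l). (x1,x2) \<in> RR" by blast
next
  fix p assume p: "p \<in> RR"
  show "case p of (x1,x2) \<Rightarrow> \<forall>u1 y1 x1'. (x1, u1, y1, x1') \<in> dlt (absQ Q l l) \<longrightarrow>
     (\<exists>u2 y2 x2'. (x2, u2, y2, x2') \<in> dlt (quotQ Q l) \<and> (x1', x2') \<in> RR \<and> piY (u1, y1) = piY (u2, y2))"
  proof (rule case_prodI2, intro allI impI)
  fix x1 x2 u1 y1 x1' assume pe: "p = (x1,x2)" and d0: "(x1,u1,y1,x1') \<in> dlt (absQ Q l l)"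
  have d: "(fst p,u1,y1,x1') \<in> dlt (absQ Q l l)" using d0 by (simp add: pe)
  have p_def: "p = (x1,x2)" by (rule pe)
  obtain x where x: "x \<in> Xs Q" "fst p = zx x" "snd p = {zx x}" using RR_E[of "fst p" "snd p"] p by auto
  from d obtain a a' where h: "fst p = zx a" "x1' = zx a'" and da: "(a,u1,y1,a') \<in> dlt Q"
    unfolding abs_dlt by blast
  have "snd p = x2" by (simp add: p_def)
  then have "(x2, u1, y1, {x1'}) \<in> dlt (quotQ Q l)" unfolding quot_dlt using h x da by auto
  moreover have "(x1', {x1'}) \<in> RR" using RR_I h dlt_in[OF da] by auto
  ultimately show "\<exists>u2 y2 x2'. (x2, u2, y2, x2') \<in> dlt (quotQ Q l) \<and> (x1', x2') \<in> RR \<and> piY (u1, y1) = piY (u2, y2)"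
    by blast
  qed
qed

lemma part2b: "simrel piY (quotQ Q l) (absQ Q l l) (RR\<inverse>)"
  unfolding simrel_def
proof (intro conjI ballI)
  fix x1 assume "x1 \<in> X0s (quotQ Q l)"
  then obtain x where x: "x \<in> X0s Q" "x1 = {zx x}" unfolding quotX0 by blast
  then have "zx x \<in> X0s (absQ Q l l)" unfolding absX0 by blast
  moreover have "(x1, zx x) \<in> RR\<inverse>" using RR_I x X0_sub by blast
  ultimately show "\<exists>x2\<in>X0s (absQ Q l l). (x1,x2) \<in> RR\<inverse>" by blast
next
  fix p assume p: "p \<in> RR\<inverse>"
  show "case p of (x1,x2) \<Rightarrow> \<forall>u1 y1 x1'. (x1, u1, y1, x1') \<in> dlt (quotQ Q l) \<longrightarrow>
     (\<exists>u2 y2 x2'. (x2, u2, y2, x2') \<in> dlt (absQ Q l l) \<and> (x1', x2') \<in> RR\<inverse> \<and> piY (u1, y1) = piY (u2, y2))"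
  proof (rule case_prodI2, intro allI impI)
  fix x1 x2 u1 y1 x1' assume pe: "p = (x1,x2)" and d0: "(x1,u1,y1,x1') \<in> dlt (quotQ Q l)"
  have d: "(fst p,u1,y1,x1') \<in> dlt (quotQ Q l)" using d0 by (simp add: pe)
  have p_def: "p = (x1,x2)" by (rule pe)
  obtain x where x: "x \<in> Xs Q" "snd p = zx x" "fst p = {zx x}" using RR_E[of "snd p" "fst p"] p by auto
  from d obtain a a' where h: "fst p = {zx a}" "x1' = {zx a'}" and da: "(a,u1,y1,a') \<in> dlt Q"
    unfolding quot_dlt by blast
  have "snd p = zx a" using h x by auto
  then have "(x2, u1, y1, zx a') \<in> dlt (absQ Q l l)" unfolding abs_dlt using da by (auto simp: p_def)
  moreover have "(x1', zx a') \<in> RR\<inverse>" using RR_I h dlt_in[OF da] by auto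
  ultimately show "\<exists>u2 y2 x2'. (x2, u2, y2, x2') \<in> dlt (absQ Q l l) \<and> (x1', x2') \<in> RR\<inverse> \<and> piY (u1, y1) = piY (u2, y2)"
    by blast
  qed
qed


lemma simrel_intro: "(\<And>x1. x1 \<in> X0s Q1 \<Longrightarrow> \<exists>x2\<in>X0s Q2. (x1,x2)\<in>R) \<Longrightarrow>
  (\<And>x1 x2 u1 y1 x1'. (x1,x2)\<in>R \<Longrightarrow> (x1,u1,y1,x1')\<in>dlt Q1 \<Longrightarrow>
     \<exists>u2 y2 x2'. (x2,u2,y2,x2') \<in> dlt Q2 \<and> (x1',x2') \<in> R \<and> piV (u1,y1) = piV (u2,y2))
  \<Longrightarrow> simrel piV Q1 Q2 R"
  unfolding simrel_def by blast

lemma simrel_D1: "simrel piV Q1 Q2 R \<Longrightarrow> x1 \<in> X0s Q1 \<Longrightarrow> \<exists>x2\<in>X0s Q2. (x1,x2)\<in>R"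
  unfolding simrel_def by blast

lemma simrel_D2: "simrel piV Q1 Q2 R \<Longrightarrow> (x1,x2)\<in>R \<Longrightarrow> (x1,u1,y1,x1')\<in>dlt Q1 \<Longrightarrow>
     \<exists>u2 y2 x2'. (x2,u2,y2,x2') \<in> dlt Q2 \<and> (x1',x2') \<in> R \<and> piV (u1,y1) = piV (u2,y2)"
  unfolding simrel_def by blast

definition R1 where "R1 = {(x,xh). x \<in> Xs Q \<and> xh \<in> Xs (absQ Q l l) \<and> xh \<in> EI Q l l x}\<inverse>"
definition R2 where "R2 = {(x,xh). x \<in> Xs Q \<and> xh \<in> Xs (quotQ Q l) \<and> xh = EI Q l l x}\<inverse>"

lemma R1_iff: "(z,x) \<in> R1 \<longleftrightarrow> x \<in> Xs Q \<and> z = zx x"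
  unfolding R1_def absX using EI_iff by auto

lemma R2_iff: "(V,x) \<in> R2 \<longleftrightarrow> x \<in> Xs Q \<and> V = {zx x}"
  unfolding R2_def quotX using EI_single by auto

lemma part3a: assumes S: "simrel piY (absQ Q l l) Q R1" shows "simrel piY (quotQ Q l) Q R2"
proof (rule simrel_intro)
  fix V assume "V \<in> X0s (quotQ Q l)"
  then obtain x0 where x0: "x0 \<in> X0s Q" "V = {zx x0}" unfolding quotX0 by blast
  then have "zx x0 \<in> X0s (absQ Q l l)" unfolding absX0 by blast
  then obtain x2 where x2: "x2 \<in> X0s Q" "(zx x0, x2) \<in> R1" using simrel_D1[OF S] by blast
  then have "(V, x2) \<in> R2" using x0 R1_iff R2_iff by auto
  then show "\<exists>x2\<in>X0s Q. (V, x2) \<in> R2" using x2 by blast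
next
  fix V x2 u y V' assume r: "(V,x2) \<in> R2" and d: "(V,u,y,V') \<in> dlt (quotQ Q l)"
  from r have x2: "x2 \<in> Xs Q" "V = {zx x2}" using R2_iff by auto
  from d obtain a a' where h: "V = {zx a}" "V' = {zx a'}" and da: "(a,u,y,a') \<in> dlt Q"
    unfolding quot_dlt by blast
  have "zx a = zx x2" using h x2 by auto
  then have "(zx x2, u, y, zx a') \<in> dlt (absQ Q l l)" unfolding abs_dlt using da by metis
  moreover have "(zx x2, x2) \<in> R1" using x2 R1_iff by auto
  ultimately obtain u2 y2 x2' where "(x2,u2,y2,x2') \<in> dlt Q" "(zx a', x2') \<in> R1" "piY (u,y) = piY (u2,y2)"
    using simrel_D2[OF S] by blast
  moreover then have "(V', x2') \<in> R2" using h R1_iff R2_iff by auto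
  ultimately show "\<exists>u2 y2 x2'. (x2,u2,y2,x2') \<in> dlt Q \<and> (V',x2') \<in> R2 \<and> piY (u,y) = piY (u2,y2)"
    by blast
qed

lemma part3b: assumes S: "simrel piY (quotQ Q l) Q R2" shows "simrel piY (absQ Q l l) Q R1"
proof (rule simrel_intro)
  fix z assume "z \<in> X0s (absQ Q l l)"
  then obtain x0 where x0: "x0 \<in> X0s Q" "z = zx x0" unfolding absX0 by blast
  then have "{zx x0} \<in> X0s (quotQ Q l)" unfolding quotX0 by blast
  then obtain x2 where x2: "x2 \<in> X0s Q" "({zx x0}, x2) \<in> R2" using simrel_D1[OF S] by blast
  then have "(z, x2) \<in> R1" using x0 R1_iff R2_iff by auto
  then show "\<exists>x2\<in>X0s Q. (z, x2) \<in> R1" using x2 by blast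
next
  fix z x2 u y z' assume r: "(z,x2) \<in> R1" and d: "(z,u,y,z') \<in> dlt (absQ Q l l)"
  from r have x2: "x2 \<in> Xs Q" "z = zx x2" using R1_iff by auto
  from d obtain a a' where h: "z = zx a" "z' = zx a'" and da: "(a,u,y,a') \<in> dlt Q"
    unfolding abs_dlt by blast
  have "{zx a} = {zx x2}" using h x2 by auto
  then have "({zx x2}, u, y, {zx a'}) \<in> dlt (quotQ Q l)" unfolding quot_dlt using da by metis
  moreover have "({zx x2}, x2) \<in> R2" using x2 R2_iff by auto
  ultimately obtain u2 y2 x2' where "(x2,u2,y2,x2') \<in> dlt Q" "({zx a'}, x2') \<in> R2" "piY (u,y) = piY (u2,y2)"
    using simrel_D2[OF S] by blast
  moreover then have "(z', x2') \<in> R1" using h R1_iff R2_iff by auto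
  ultimately show "\<exists>u2 y2 x2'. (x2,u2,y2,x2') \<in> dlt Q \<and> (z',x2') \<in> R1 \<and> piY (u,y) = piY (u2,y2)"
    by blast
qed

end



definition cls :: "'x set \<Rightarrow> ('x \<Rightarrow> 'b) \<Rightarrow> 'x set set" where
  "cls X f = (\<lambda>x. {x'\<in>X. f x' = f x}) ` X"

lemma cls_eq_iff: "cls X f = cls X g \<longleftrightarrow> (\<forall>x\<in>X. \<forall>x'\<in>X. f x = f x' \<longleftrightarrow> g x = g x')"
proof
  assume e: "cls X f = cls X g"
  show "\<forall>x\<in>X. \<forall>x'\<in>X. f x = f x' \<longleftrightarrow> g x = g x'"
  proof (intro ballI)
    fix x x' assume x: "x \<in> X" and x': "x' \<in> X"
    have "{z\<in>X. f z = f x} \<in> cls X g" using e x unfolding cls_def by blast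
    then obtain a where a: "a \<in> X" "{z\<in>X. f z = f x} = {z\<in>X. g z = g a}" unfolding cls_def by blast
    then have "g x = g a" using x by blast
    then have k: "{z\<in>X. f z = f x} = {z\<in>X. g z = g x}" using a by simp
    have "f x = f x' \<longleftrightarrow> x' \<in> {z\<in>X. f z = f x}" using x' by auto
    also have "\<dots> \<longleftrightarrow> x' \<in> {z\<in>X. g z = g x}" using k by simp
    also have "\<dots> \<longleftrightarrow> g x = g x'" using x' by auto
    finally show "f x = f x' \<longleftrightarrow> g x = g x'" .
  qed
next
  assume h: "\<forall>x\<in>X. \<forall>x'\<in>X. f x = f x' \<longleftrightarrow> g x = g x'"
  have "\<And>x. x \<in> X \<Longrightarrow> {x'\<in>X. f x' = f x} = {x'\<in>X. g x' = g x}" using h by blast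
  then show "cls X f = cls X g" unfolding cls_def by (rule image_cong[OF refl])
qed

lemma Phi1_cls: assumes "\<And>x. x \<in> Xs Q \<Longrightarrow> Hd Q x \<subseteq> Ys Q"
  shows "Phi Q (Suc 0) = cls (Xs Q) (Hd Q)"
proof
  show "Phi Q (Suc 0) \<subseteq> cls (Xs Q) (Hd Q)"
  proof
    fix C assume "C \<in> Phi Q (Suc 0)"
    then obtain V where C: "C = Hinv Q V" "C \<noteq> {}" by auto
    then obtain x where x: "x \<in> C" by blast
    then have "x \<in> Xs Q" "Hd Q x = V" using C unfolding Hinv_def by auto
    moreover then have "C = {x'\<in>Xs Q. Hd Q x' = Hd Q x}" using C unfolding Hinv_def by simp
    ultimately show "C \<in> cls (Xs Q) (Hd Q)" unfolding cls_def by blast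
  qed
  show "cls (Xs Q) (Hd Q) \<subseteq> Phi Q (Suc 0)"
  proof
    fix C assume "C \<in> cls (Xs Q) (Hd Q)"
    then obtain x where x: "x \<in> Xs Q" "C = {x'\<in>Xs Q. Hd Q x' = Hd Q x}" unfolding cls_def by blast
    then have "C = Hinv Q (Hd Q x)" "C \<noteq> {}" unfolding Hinv_def by auto
    moreover have "Hd Q x \<subseteq> Ys Q" using assms x by blast
    ultimately show "C \<in> Phi Q (Suc 0)" by auto
  qed
qed

lemma phi_step_cls:
  assumes TX: "\<And>x. x \<in> Xs Q \<Longrightarrow> Td Q x \<subseteq> Xs Q"
  shows "phi_step Q (cls (Xs Q) f) = cls (Xs Q) (\<lambda>x. (f x, f ` Td Q x))"
proof -
  let ?X = "Xs Q"
  let ?P = "cls ?X f"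
  let ?K = "\<lambda>x. {x'\<in>?X. f x' = f x}"
  define Ax where "Ax x Xi' = (if x \<in> Tinv Q Xi' then Tinv Q Xi' else ?X - Tinv Q Xi')" for x Xi'
  have Tsub: "Tinv Q C \<subseteq> ?X" for C unfolding Tinv_def by auto
  have mem: "x' \<in> Tinv Q (?K z) \<longleftrightarrow> (\<exists>w\<in>Td Q x'. f w = f z)" if "x' \<in> ?X" for x' z
    using TX[OF that] that unfolding Tinv_def by blast
  have key: "{x'\<in>?X. (f x', f ` Td Q x') = (f x, f ` Td Q x)} = ?K x \<inter> (\<Inter>Xi'\<in>?P. Ax x Xi')"
    if x: "x \<in> ?X" for x
  proof (intro set_eqI iffI)
    fix x' assume a: "x' \<in> {x'\<in>?X. (f x', f ` Td Q x') = (f x, f ` Td Q x)}"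
    then have x': "x' \<in> ?X" and ff: "f x' = f x" and im: "f ` Td Q x' = f ` Td Q x" by auto
    have "x' \<in> Ax x Xi'" if XP: "Xi' \<in> ?P" for Xi'
    proof -
      obtain z where z: "z \<in> ?X" "Xi' = ?K z" using XP unfolding cls_def by blast
      have "x' \<in> Tinv Q Xi' \<longleftrightarrow> x \<in> Tinv Q Xi'"
      proof -
        have "x' \<in> Tinv Q Xi' \<longleftrightarrow> (\<exists>w\<in>Td Q x'. f w = f z)" using mem[OF x'] z by simp
        also have "\<dots> \<longleftrightarrow> (\<exists>v\<in>f ` Td Q x'. v = f z)" by blast
        also have "\<dots> \<longleftrightarrow> (\<exists>v\<in>f ` Td Q x. v = f z)" using im by simp
        also have "\<dots> \<longleftrightarrow> (\<exists>w\<in>Td Q x. f w = f z)" by blast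
        also have "\<dots> \<longleftrightarrow> x \<in> Tinv Q Xi'" using mem[OF x] z by simp
        finally show ?thesis .
      qed
      then show ?thesis unfolding Ax_def using x' by auto
    qed
    then show "x' \<in> ?K x \<inter> (\<Inter>Xi'\<in>?P. Ax x Xi')" using x' ff by blast
  next
    fix x' assume a: "x' \<in> ?K x \<inter> (\<Inter>Xi'\<in>?P. Ax x Xi')"
    then have x': "x' \<in> ?X" and ff: "f x' = f x" and A: "\<And>Xi'. Xi' \<in> ?P \<Longrightarrow> x' \<in> Ax x Xi'" by auto
    have eq: "x' \<in> Tinv Q (?K z) \<longleftrightarrow> x \<in> Tinv Q (?K z)" if z: "z \<in> ?X" for z
    proof -
      have "?K z \<in> ?P" using z unfolding cls_def by blast
      then have "x' \<in> Ax x (?K z)" by (rule A)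
      then show ?thesis unfolding Ax_def by (auto split: if_splits)
    qed
    have "f ` Td Q x' = f ` Td Q x"
    proof
      show "f ` Td Q x' \<subseteq> f ` Td Q x"
      proof
        fix v assume "v \<in> f ` Td Q x'"
        then obtain w where w: "w \<in> Td Q x'" "v = f w" by blast
        then have wX: "w \<in> ?X" using TX[OF x'] by blast
        have "x' \<in> Tinv Q (?K w)" using mem[OF x'] w x' by blast
        then have "x \<in> Tinv Q (?K w)" using eq[OF wX] by simp
        then obtain w' where "w' \<in> Td Q x" "f w' = f w" using mem[OF x] by blast
        then show "v \<in> f ` Td Q x" using w by (metis image_eqI)
      qed
      show "f ` Td Q x \<subseteq> f ` Td Q x'"
      proof
        fix v assume "v \<in> f ` Td Q x"
        then obtain w where w: "w \<in> Td Q x" "v = f w" by blast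
        then have wX: "w \<in> ?X" using TX[OF x] by blast
        have "x \<in> Tinv Q (?K w)" using mem[OF x] w x by blast
        then have "x' \<in> Tinv Q (?K w)" using eq[OF wX] by simp
        then obtain w' where "w' \<in> Td Q x'" "f w' = f w" using mem[OF x'] by blast
        then show "v \<in> f ` Td Q x'" using w by (metis image_eqI)
      qed
    qed
    then show "x' \<in> {x'\<in>?X. (f x', f ` Td Q x') = (f x, f ` Td Q x)}" using x' ff by simp
  qed
  show ?thesis
  proof
    show "phi_step Q ?P \<subseteq> cls ?X (\<lambda>x. (f x, f ` Td Q x))"
    proof
      fix C assume "C \<in> phi_step Q ?P"
      then obtain Xi A where C: "C \<noteq> {}" "Xi \<in> ?P" and
        A: "\<forall>Xi'\<in>?P. A Xi' = Tinv Q Xi' \<or> A Xi' = ?X - Tinv Q Xi'" and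
        Ce: "C = Xi \<inter> (\<Inter>Xi'\<in>?P. A Xi')" unfolding phi_step_def by blast
      obtain x where xC: "x \<in> C" using C by blast
      obtain z where z: "z \<in> ?X" "Xi = ?K z" using C unfolding cls_def by blast
      have x: "x \<in> ?X" and fx: "f x = f z" using xC Ce z by auto
      have "Xi = ?K x" using z fx by simp
      moreover have "A Xi' = Ax x Xi'" if "Xi' \<in> ?P" for Xi'
      proof -
        have "x \<in> A Xi'" using xC Ce that by blast
        then show ?thesis using A that unfolding Ax_def by auto
      qed
      ultimately have "C = ?K x \<inter> (\<Inter>Xi'\<in>?P. Ax x Xi')" using Ce by auto
      then have "C = {x'\<in>?X. (f x', f ` Td Q x') = (f x, f ` Td Q x)}" using key[OF x] by simp
      then show "C \<in> cls ?X (\<lambda>x. (f x, f ` Td Q x))" using x unfolding cls_def by blast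
    qed
    show "cls ?X (\<lambda>x. (f x, f ` Td Q x)) \<subseteq> phi_step Q ?P"
    proof
      fix C assume "C \<in> cls ?X (\<lambda>x. (f x, f ` Td Q x))"
      then obtain x where x: "x \<in> ?X" and Ce: "C = {x'\<in>?X. (f x', f ` Td Q x') = (f x, f ` Td Q x)}"
        unfolding cls_def by blast
      have "C = ?K x \<inter> (\<Inter>Xi'\<in>?P. Ax x Xi')" using key[OF x] Ce by simp
      moreover have "C \<noteq> {}" using Ce x by blast
      moreover have "?K x \<in> ?P" using x unfolding cls_def by blast
      moreover have "\<forall>Xi'\<in>?P. Ax x Xi' = Tinv Q Xi' \<or> Ax x Xi' = ?X - Tinv Q Xi'" unfolding Ax_def by auto
      ultimately show "C \<in> phi_step Q ?P" unfolding phi_step_def by blast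
    qed
  qed
qed


context P12 begin

lemma Td_sub: "x \<in> Xs Q \<Longrightarrow> Td Q x \<subseteq> Xs Q"
  unfolding Td_char using dlt_in by blast

lemma Td_ne: assumes x: "x \<in> Xs Q" shows "\<exists>z. z \<in> Td Q x"
proof -
  obtain mu nu xi k where t: "(mu,nu,xi)\<in>full_beh Q" and k: "xi k = x" using reach[OF x] by blast
  have "(x, mu k, nu k, xi (Suc k)) \<in> dlt Q" using traj_in[OF t, of k] k by simp
  then show ?thesis unfolding Td_char by blast
qed

lemma Phi_Suc: "n \<ge> 1 \<Longrightarrow> Phi Q (Suc n) = phi_step Q (Phi Q n)"
  by (cases n) auto

lemma Phi_take: "1 \<le> n \<Longrightarrow> n \<le> l \<Longrightarrow> Phi Q n = cls (Xs Q) (\<lambda>x. take n (zx x))"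
proof (induction n rule: nat_induct_at_least)
  case base
  have "Phi Q (Suc 0) = cls (Xs Q) (Hd Q)"
    by (rule Phi1_cls) (use dlt_in in \<open>auto simp: Hd_def\<close>)
  also have "\<dots> = cls (Xs Q) (\<lambda>x. take 1 (zx x))"
    unfolding cls_eq_iff
  proof (intro ballI)
    fix x x' assume x: "x \<in> Xs Q" and x': "x' \<in> Xs Q"
    obtain y where y: "Hd Q x = {y}" "hd (zx x) = Some y" using Hd_single[OF x] by blast
    obtain y' where y': "Hd Q x' = {y'}" "hd (zx x') = Some y'" using Hd_single[OF x'] by blast
    have "zx x \<noteq> []" "zx x' \<noteq> []" using zx_len[OF x] zx_len[OF x'] l1 by auto
    then have "take 1 (zx x) = [Some y]" "take 1 (zx x') = [Some y']" using y y'
      by (auto simp: neq_Nil_conv)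
    then show "Hd Q x = Hd Q x' \<longleftrightarrow> take 1 (zx x) = take 1 (zx x')" using y y' by auto
  qed
  finally show ?case by simp
next
  case (Suc n)
  then have n: "1 \<le> n" "Suc n \<le> l" by auto
  have "Phi Q (Suc n) = phi_step Q (cls (Xs Q) (\<lambda>x. take n (zx x)))"
    using Phi_Suc[OF n(1)] Suc.IH n by simp
  also have "\<dots> = cls (Xs Q) (\<lambda>x. (take n (zx x), (\<lambda>x. take n (zx x)) ` Td Q x))"
    by (rule phi_step_cls[OF Td_sub])
  also have "\<dots> = cls (Xs Q) (\<lambda>x. take (Suc n) (zx x))"
    unfolding cls_eq_iff
  proof (intro ballI)
    have im: "(\<lambda>x. take n (zx x)) ` Td Q x = {take n (tl (zx x))}" if x: "x \<in> Xs Q" for x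
    proof -
      have "take n (zx z) = take n (tl (zx x))" if z: "z \<in> Td Q x" for z
      proof -
        obtain u y where d: "(x,u,y,z) \<in> dlt Q" using z unfolding Td_char by blast
        have "tl (zx x) = take (l-1) (zx z)" using trans_zx[OF d] by simp
        then show ?thesis using n by simp
      qed
      note tk = this
      obtain z0 where z0: "z0 \<in> Td Q x" using Td_ne[OF x] by blast
      show ?thesis
      proof
        show "(\<lambda>x. take n (zx x)) ` Td Q x \<subseteq> {take n (tl (zx x))}" using tk by blast
        have "take n (zx z0) \<in> (\<lambda>x. take n (zx x)) ` Td Q x" using z0 by (rule imageI)
        then show "{take n (tl (zx x))} \<subseteq> (\<lambda>x. take n (zx x)) ` Td Q x" using tk[OF z0] by simp
      qed
    qed
    fix x x' assume x: "x \<in> Xs Q" and x': "x' \<in> Xs Q"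
    obtain a r where ar: "zx x = a # r" using zx_len[OF x] l1 by (cases "zx x") auto
    obtain a' r' where ar': "zx x' = a' # r'" using zx_len[OF x'] l1 by (cases "zx x'") auto
    obtain m where m: "n = Suc m" using n by (cases n) auto
    show "(take n (zx x), (\<lambda>x. take n (zx x)) ` Td Q x) = (take n (zx x'), (\<lambda>x. take n (zx x)) ` Td Q x')
          \<longleftrightarrow> take (Suc n) (zx x) = take (Suc n) (zx x')"
    proof -
      have tt: "take m q = take m (take (Suc m) q)" for q :: "'y option list" by simp
      have "(take n (zx x), {take n (tl (zx x))}) = (take n (zx x'), {take n (tl (zx x'))})
         \<longleftrightarrow> a = a' \<and> take m r = take m r' \<and> take (Suc m) r = take (Suc m) r'"
        using ar ar' m by simp
      also have "\<dots> \<longleftrightarrow> a = a' \<and> take (Suc m) r = take (Suc m) r'" using tt[of r] tt[of r'] by metis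
      also have "\<dots> \<longleftrightarrow> take (Suc n) (zx x) = take (Suc n) (zx x')" using ar ar' m by simp
      finally show ?thesis unfolding im[OF x] im[OF x'] .
    qed
  qed
  finally show ?case .
qed

lemma Phi_l: "Phi Q l = cls (Xs Q) zx"
proof -
  have "Phi Q l = cls (Xs Q) (\<lambda>x. take l (zx x))" using Phi_take l1 by simp
  also have "\<dots> = cls (Xs Q) zx" unfolding cls_eq_iff by (simp add: zx_len)
  finally show ?thesis .
qed

lemma Phi_l1: "Phi Q (l+1) = cls (Xs Q) (\<lambda>x. (zx x, zx ` Td Q x))"
proof -
  have "Phi Q (l+1) = phi_step Q (cls (Xs Q) zx)" using Phi_Suc l1 Phi_l by simp
  also have "\<dots> = cls (Xs Q) (\<lambda>x. (zx x, zx ` Td Q x))" by (rule phi_step_cls[OF Td_sub])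
  finally show ?thesis .
qed

lemma Phi_iff: "Phi Q (l + 1) = Phi Q l \<longleftrightarrow> (\<forall>x\<in>Xs Q. \<forall>x'\<in>Xs Q. zx x = zx x' \<longrightarrow> zx ` Td Q x \<subseteq> zx ` Td Q x')"
  unfolding Phi_l1 Phi_l cls_eq_iff
proof
  assume h: "\<forall>x\<in>Xs Q. \<forall>x'\<in>Xs Q. ((zx x, zx ` Td Q x) = (zx x', zx ` Td Q x')) = (zx x = zx x')"
  show "\<forall>x\<in>Xs Q. \<forall>x'\<in>Xs Q. zx x = zx x' \<longrightarrow> zx ` Td Q x \<subseteq> zx ` Td Q x'"
  proof (intro ballI impI)
    fix x x' assume "x \<in> Xs Q" "x' \<in> Xs Q" "zx x = zx x'"
    then have "(zx x, zx ` Td Q x) = (zx x', zx ` Td Q x')" using h by blast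
    then show "zx ` Td Q x \<subseteq> zx ` Td Q x'" by simp
  qed
next
  assume h: "\<forall>x\<in>Xs Q. \<forall>x'\<in>Xs Q. zx x = zx x' \<longrightarrow> zx ` Td Q x \<subseteq> zx ` Td Q x'"
  show "\<forall>x\<in>Xs Q. \<forall>x'\<in>Xs Q. ((zx x, zx ` Td Q x) = (zx x', zx ` Td Q x')) = (zx x = zx x')"
  proof (intro ballI)
    fix x x' assume x: "x \<in> Xs Q" and x': "x' \<in> Xs Q"
    show "((zx x, zx ` Td Q x) = (zx x', zx ` Td Q x')) = (zx x = zx x')"
    proof
      assume "zx x = zx x'"
      moreover have "zx ` Td Q x \<subseteq> zx ` Td Q x'" using h x x' calculation by blast
      moreover have "zx ` Td Q x' \<subseteq> zx ` Td Q x" using h x x' calculation by metis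
      ultimately show "(zx x, zx ` Td Q x) = (zx x', zx ` Td Q x')" by simp
    qed simp
  qed
qed

end




lemma Pi_iff: "z \<in> Pi_l (Suc l) (beh Q) \<longleftrightarrow> (\<exists>mu nu xi j. (mu,nu,xi) \<in> full_beh Q \<and> z = restr (wof nu) (int j - int l) (int j))"
proof -
  have e: "int j - int (Suc l) + 1 = int j - int l" for j by simp
  have "z \<in> Pi_l (Suc l) (beh Q) \<longleftrightarrow> (\<exists>j w. w \<in> beh Q \<and> z = restr w (int j - int l) (int j))"
    unfolding Pi_l_def e by blast
  also have "\<dots> \<longleftrightarrow> (\<exists>mu nu xi j. (mu,nu,xi) \<in> full_beh Q \<and> z = restr (wof nu) (int j - int l) (int j))"
    unfolding beh_iff by blast
  finally show ?thesis .
qed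

context P12 begin

lemma EL: assumes x: "x \<in> Xs Q" shows "Ecs Q 0 (int l) x = (\<lambda>z. hd (zx x) # zx z) ` Td Q x"
proof -
  have n: "nat (int l + 1) = Suc l" by simp
  show ?thesis
  proof
    show "Ecs Q 0 (int l) x \<subseteq> (\<lambda>z. hd (zx x) # zx z) ` Td Q x"
    proof
      fix s assume "s \<in> Ecs Q 0 (int l) x"
      then obtain mu nu xi k where t: "(mu,nu,xi) \<in> full_beh Q" and k: "xi k = x" and s: "s = str nu k (Suc l)"
        unfolding Ecs0_char n by blast
      have d: "(x, mu k, nu k, xi (Suc k)) \<in> dlt Q" using traj_in[OF t, of k] k by simp
      have "s = Some (nu k) # zx (xi (Suc k))" using s zx_traj[OF t, of "Suc k"] by (simp add: str_Suc)
      also have "Some (nu k) = hd (zx x)" using hd_zx[OF d] by simp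
      finally have "s = hd (zx x) # zx (xi (Suc k))" .
      moreover have "xi (Suc k) \<in> Td Q x" using d unfolding Td_char by blast
      ultimately show "s \<in> (\<lambda>z. hd (zx x) # zx z) ` Td Q x" by blast
    qed
    show "(\<lambda>z. hd (zx x) # zx z) ` Td Q x \<subseteq> Ecs Q 0 (int l) x"
    proof
      fix s assume "s \<in> (\<lambda>z. hd (zx x) # zx z) ` Td Q x"
      then obtain z where z: "z \<in> Td Q x" and s: "s = hd (zx x) # zx z" by blast
      then obtain u y where d: "(x,u,y,z) \<in> dlt Q" unfolding Td_char by blast
      obtain mu nu xi k where t: "(mu,nu,xi)\<in>full_beh Q" and h: "xi k = x" "mu k = u" "nu k = y" "xi (Suc k) = z"
        using splice[OF d] by blast
      have "str nu k (Suc l) = Some y # zx z" using zx_traj[OF t, of "Suc k"] h by (simp add: str_Suc)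
      also have "Some y = hd (zx x)" using hd_zx[OF d] by simp
      finally have "s = str nu k (Suc l)" using s by simp
      then show "s \<in> Ecs Q 0 (int l) x" unfolding Ecs0_char n using t h(1) by blast
    qed
  qed
qed

lemma sres_l: "length s = Suc l \<Longrightarrow> sres s 0 (int l - 1) = take l s"
  using sres_take[of "int l - 1" s] by simp

lemma async_iff: "async_complete Q l l \<longleftrightarrow> (\<forall>x\<in>Xs Q. \<forall>a\<in>Xs Q. zx x = zx a \<longrightarrow> zx ` Td Q x \<subseteq> zx ` Td Q a)"
proof -
  have e0: "int l - int l = 0" by simp
  show ?thesis unfolding async_complete_def e0
  proof
    assume A: "\<forall>x\<in>Xs Q. \<forall>zeta\<in>Pi_l (Suc l) (beh Q). sres zeta 0 (int l - 1) \<in> EI Q l l x \<longrightarrow> zeta \<in> Ecs Q 0 (int l) x"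
    show "\<forall>x\<in>Xs Q. \<forall>a\<in>Xs Q. zx x = zx a \<longrightarrow> zx ` Td Q x \<subseteq> zx ` Td Q a"
    proof (intro ballI impI subsetI)
      fix x a v assume x: "x \<in> Xs Q" and a: "a \<in> Xs Q" and eq: "zx x = zx a" and v: "v \<in> zx ` Td Q x"
      then obtain z where z: "z \<in> Td Q x" and vz: "v = zx z" by blast
      then obtain u y where d: "(x,u,y,z) \<in> dlt Q" unfolding Td_char by blast
      obtain mu nu xi k where t: "(mu,nu,xi)\<in>full_beh Q" and h: "xi k = x" "mu k = u" "nu k = y" "xi (Suc k) = z"
        using splice[OF d] by blast
      let ?s = "str nu k (Suc l)"
      have "?s = restr (wof nu) (int (k+l) - int l) (int (k+l))" using restr_wof_str2[of l "k+l" nu] by simp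
      then have sP: "?s \<in> Pi_l (Suc l) (beh Q)" unfolding Pi_iff using t by blast
      have "sres ?s 0 (int l - 1) = take l ?s" by (rule sres_l) simp
      also have "\<dots> = str nu k l" by (simp add: take_str)
      also have "\<dots> = zx a" using zx_traj[OF t, of k] h eq by simp
      finally have "sres ?s 0 (int l - 1) \<in> EI Q l l a" using EI_iff[OF a] by simp
      then have "?s \<in> Ecs Q 0 (int l) a" using A a sP by blast
      then obtain z' where z': "z' \<in> Td Q a" and e: "?s = hd (zx a) # zx z'" unfolding EL[OF a] by blast
      have "?s = Some y # zx z" using zx_traj[OF t, of "Suc k"] h by (simp add: str_Suc)
      then have "zx z = zx z'" using e by simp
      then show "v \<in> zx ` Td Q a" using z' vz by simp
    qed
  next
    assume C: "\<forall>x\<in>Xs Q. \<forall>a\<in>Xs Q. zx x = zx a \<longrightarrow> zx ` Td Q x \<subseteq> zx ` Td Q a"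
    show "\<forall>x\<in>Xs Q. \<forall>zeta\<in>Pi_l (Suc l) (beh Q). sres zeta 0 (int l - 1) \<in> EI Q l l x \<longrightarrow> zeta \<in> Ecs Q 0 (int l) x"
    proof (intro ballI impI)
      fix x s assume x: "x \<in> Xs Q" and sP: "s \<in> Pi_l (Suc l) (beh Q)" and sE: "sres s 0 (int l - 1) \<in> EI Q l l x"
      obtain mu nu xi j where t: "(mu,nu,xi) \<in> full_beh Q" and s: "s = restr (wof nu) (int j - int l) (int j)"
        using sP unfolding Pi_iff by blast
      have len: "length s = Suc l" using s by simp
      have tk: "take l s = zx x" using sE sres_l[OF len] EI_iff[OF x] by simp
      obtain y where y: "hd (zx x) = Some y" using Hd_single[OF x] by blast
      have ne: "zx x \<noteq> []" using zx_len[OF x] l1 by auto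
      have "s ! 0 = take l s ! 0" using l1 by simp
      also have "\<dots> = Some y" using tk y ne by (simp add: hd_conv_nth)
      finally have s0: "s ! 0 = Some y" .
      have "s ! 0 = wof nu (int j - int l)" using s by (simp add: nth_restr)
      then have jl: "l \<le> j" using s0 by (simp add: wof_def split: if_splits)
      define k where "k = j - l"
      have s2: "s = str nu k (Suc l)" using s restr_wof_str2[OF jl] by (simp add: k_def)
      have "zx (xi k) = str nu k l" by (rule zx_traj[OF t])
      also have "\<dots> = take l s" using s2 by (simp add: take_str)
      finally have eqa: "zx (xi k) = zx x" using tk by simp
      have aX: "xi k \<in> Xs Q" using traj_in[OF t, of k] by simp
      have n: "nat (int l + 1) = Suc l" by simp
      have "s \<in> Ecs Q 0 (int l) (xi k)" unfolding Ecs0_char n using t s2 by blast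
      then obtain z where z: "z \<in> Td Q (xi k)" and e: "s = hd (zx (xi k)) # zx z" unfolding EL[OF aX] by blast
      have "zx z \<in> zx ` Td Q x" using C aX x eqa z by blast
      then obtain z' where z': "z' \<in> Td Q x" "zx z = zx z'" by blast
      have "s = hd (zx x) # zx z'" using e eqa z' by simp
      then show "s \<in> Ecs Q 0 (int l) x" unfolding EL[OF x] using z' by blast
    qed
  qed
qed

lemma part4: "async_complete Q l l \<longleftrightarrow> Phi Q (l + 1) = Phi Q l"
  unfolding async_iff Phi_iff by (rule refl)

end



lemma quot_simps: "Us (quotQ Q l) = Us Q" "Ys (quotQ Q l) = Ys Q"
  by (simp_all add: quotQ_def)

lemma full_beh_D: "(mu,nu,xi) \<in> full_beh Q' \<Longrightarrow> xi k \<in> Xs Q' \<and> mu k \<in> Us Q' \<and> nu k \<in> Ys Q' \<and>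
   (xi k, mu k, nu k, xi (Suc k)) \<in> dlt Q' \<and> xi 0 \<in> X0s Q'"
  unfolding full_beh_def by auto

context P12 begin

lemma quot_traj_str: assumes t: "(mu,nu,sg) \<in> full_beh (quotQ Q l)"
  shows "sg k = {str nu k l}"
proof -
  have tr: "\<exists>b b'. sg k = {zx b} \<and> sg (Suc k) = {zx b'} \<and> (b, mu k, nu k, b') \<in> dlt Q" for k
    using full_beh_D[OF t, of k] unfolding quot_dlt by blast
  define Z where "Z k = the_elem (sg k)" for k
  have Z: "Z k = Some (nu k) # take (l-1) (Z (Suc k)) \<and> length (Z k) = l \<and> sg k = {Z k}" for k
  proof -
    obtain b b' where h: "sg k = {zx b}" "sg (Suc k) = {zx b'}" "(b, mu k, nu k, b') \<in> dlt Q" using tr by blast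
    have "Z k = zx b" "Z (Suc k) = zx b'" using h by (simp_all add: Z_def)
    then show ?thesis using trans_zx[OF h(3)] zx_len dlt_in[OF h(3)] h(1) l1 by simp
  qed
  have nth: "i < l \<Longrightarrow> Z k ! i = Some (nu (k+i))" for i
  proof (induction i arbitrary: k)
    case 0 then show ?case using Z[of k] by simp
  next
    case (Suc i)
    have "Z k ! Suc i = take (l-1) (Z (Suc k)) ! i" using Z[of k] by simp
    also have "\<dots> = Z (Suc k) ! i" using Suc.prems by simp
    also have "\<dots> = Some (nu (Suc k + i))" using Suc.IH Suc.prems by simp
    finally show ?case by simp
  qed
  have lenZ: "length (Z k) = l" using Z[of k] by blast
  have "Z k = str nu k l"
  proof (rule nth_equalityI)
    show "length (Z k) = length (str nu k l)" using lenZ by simp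
    fix i assume "i < length (Z k)"
    then have "i < l" using lenZ by simp
    then show "Z k ! i = str nu k l ! i" by (simp add: nth)
  qed
  moreover have "sg k = {Z k}" using Z[of k] by blast
  ultimately show ?thesis by simp
qed

lemma tl_str: "tl (str nu k (Suc n)) = str nu (Suc k) n" by (simp add: str_Suc)

lemma part1a: assumes w: "w \<in> beh (quotQ Q l)" shows "w \<in> salca Q l"
proof -
  obtain mu nu sg where t: "(mu,nu,sg) \<in> full_beh (quotQ Q l)" and wn: "w = wof nu"
    using w unfolding beh_iff by blast
  have sg: "sg k = {str nu k l}" for k by (rule quot_traj_str[OF t])
  have nuY: "nu k \<in> Ys Q" for k using full_beh_D[OF t, of k] by (simp add: quot_simps)
  obtain x0 where x0: "x0 \<in> X0s Q" "sg 0 = {zx x0}" using full_beh_D[OF t, of 0] unfolding quotX0 by blast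
  obtain mu0 nu0 xi0 where t0: "(mu0,nu0,xi0) \<in> full_beh Q" and x00: "xi0 0 = x0" using live0[OF x0(1)] by blast
  have "str nu0 0 l = str nu 0 l" using zx_traj[OF t0, of 0] x00 x0(2) sg[of 0] by simp
  then have nu0: "m < l \<Longrightarrow> nu0 m = nu m" for m using nth_str[of m l nu0 0] nth_str[of m l nu 0] by simp
  have w0: "wof nu0 \<in> beh Q" unfolding beh_iff using t0 by blast
  have c3: "restr w (- int l) 0 \<in> (\<lambda>v. restr v (- int l) 0) ` beh Q"
  proof -
    have "restr (wof nu) (- int l) 0 = restr (wof nu0) (- int l) 0"
    proof (rule restr_cong)
      fix i assume "i < nat (0 - - int l + 1)"
      then have "i \<le> l" by simp
      show "wof nu (- int l + int i) = wof nu0 (- int l + int i)"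
        using nu0[of 0] l1 \<open>i \<le> l\<close> by (auto simp: wof_def)
    qed
    then show ?thesis using w0 wn by (simp add: image_eqI)
  qed
  have c4: "restr w (k - int l) k \<in> Pi_l (Suc l) (beh Q)" if k0: "k \<ge> 0" for k
  proof -
    obtain kk where kk: "k = int kk" using k0 nonneg_eq_int by blast
    show ?thesis
    proof (cases "kk < l")
      case True
      have "restr (wof nu) (int kk - int l) (int kk) = restr (wof nu0) (int kk - int l) (int kk)"
      proof (rule restr_cong)
        fix i assume "i < nat (int kk - (int kk - int l) + 1)"
        then have "i \<le> l" by simp
        show "wof nu (int kk - int l + int i) = wof nu0 (int kk - int l + int i)"
        proof (cases "int kk - int l + int i < 0")
          case True then show ?thesis by (simp add: wof_def)
        next
          case False
          then have "nat (int kk - int l + int i) < l" using \<open>kk < l\<close> \<open>i \<le> l\<close> by linarith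
          then show ?thesis using False nu0 by (simp add: wof_def)
        qed
      qed
      then have "restr w (k - int l) k = restr (wof nu0) (int kk - int l) (int kk)" using wn kk by simp
      then show ?thesis unfolding Pi_iff using t0 by (intro exI[of _ mu0] exI[of _ nu0] exI[of _ xi0] exI[of _ kk]) simp
    next
      case False
      define m where "m = kk - l"
      have kkm: "kk = m + l" using False m_def by simp
      obtain b b' where h: "sg m = {zx b}" "sg (Suc m) = {zx b'}" and d: "(b, mu m, nu m, b') \<in> dlt Q"
        using full_beh_D[OF t, of m] unfolding quot_dlt by blast
      obtain mu' nu' xi' k0 where t': "(mu',nu',xi')\<in>full_beh Q" and h': "xi' k0 = b" "xi' (Suc k0) = b'"
        using splice[OF d] by blast
      have e1: "str nu' k0 l = str nu m l" using zx_traj[OF t', of k0] h'(1) h(1) sg[of m] by simp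
      have e2: "str nu' (Suc k0) l = str nu (Suc m) l" using zx_traj[OF t', of "Suc k0"] h'(2) h(2) sg[of "Suc m"] by simp
      have "nu' k0 = nu m" using e1 nth_str[of 0 l nu' k0] nth_str[of 0 l nu m] l1 by simp
      then have e3: "str nu m (Suc l) = str nu' k0 (Suc l)" using e2 by (simp add: str_Suc)
      have "restr w (k - int l) k = str nu m (Suc l)" using restr_wof_str2[of l kk nu] wn kk kkm by simp
      also have "\<dots> = restr (wof nu') (int (k0 + l) - int l) (int (k0+l))"
        using e3 restr_wof_str2[of l "k0+l" nu'] by simp
      finally show ?thesis unfolding Pi_iff using t' by (intro exI[of _ mu'] exI[of _ nu'] exI[of _ xi'] exI[of _ "k0+l"]) simp
    qed
  qed
  have a: "\<forall>k<0. w k = None" using wn by (simp add: wof_def)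
  have b: "\<forall>k\<ge>0. w k \<in> Some ` Ys Q" using wn nuY by (simp add: wof_def)
  have c: "\<forall>k\<ge>0. restr w (k - int l) k \<in> Pi_l (Suc l) (beh Q)" using c4 by blast
  show ?thesis unfolding salca_def mem_Collect_eq using a b c3 c by blast
qed

lemma part1b: assumes w: "w \<in> salca Q l" shows "w \<in> beh (quotQ Q l)"
proof -
  have wN: "\<And>k. k < 0 \<Longrightarrow> w k = None" and wS: "\<And>k. k \<ge> 0 \<Longrightarrow> w k \<in> Some ` Ys Q"
    and w4: "\<And>k. k \<ge> 0 \<Longrightarrow> restr w (k - int l) k \<in> Pi_l (Suc l) (beh Q)"
    using w unfolding salca_def by auto
  define nu where "nu n = the (w (int n))" for n
  have wn: "w = wof nu"
  proof
    fix k show "w k = wof nu k"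
    proof (cases "k < 0")
      case True then show ?thesis using wN by (simp add: wof_def)
    next
      case False
      then have "w k \<in> Some ` Ys Q" using wS by simp
      then show ?thesis using False by (auto simp: wof_def nu_def)
    qed
  qed
  have nuY: "nu n \<in> Ys Q" for n
  proof -
    have "w (int n) \<in> Some ` Ys Q" using wS by simp
    then show ?thesis by (auto simp: nu_def)
  qed
  have W: "\<exists>mu' nu' xi' j0. (mu',nu',xi') \<in> full_beh Q \<and> str nu n (Suc l) = str nu' j0 (Suc l)" for n
  proof -
    have "restr w (int (n+l) - int l) (int (n+l)) \<in> Pi_l (Suc l) (beh Q)" using w4[of "int (n+l)"] by simp
    then obtain mu' nu' xi' j where t': "(mu',nu',xi') \<in> full_beh Q"
      and e: "restr (wof nu) (int (n+l) - int l) (int (n+l)) = restr (wof nu') (int j - int l) (int j)"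
      unfolding Pi_iff wn by blast
    have L: "restr (wof nu) (int (n+l) - int l) (int (n+l)) = str nu n (Suc l)"
      using restr_wof_str2[of l "n+l" nu] by simp
    have "restr (wof nu') (int j - int l) (int j) ! 0 = wof nu' (int j - int l)" by (simp add: nth_restr)
    moreover have "str nu n (Suc l) ! 0 = Some (nu n)" by simp
    ultimately have "wof nu' (int j - int l) = Some (nu n)" using e L by simp
    then have jl: "l \<le> j" by (simp add: wof_def split: if_splits)
    have "str nu n (Suc l) = str nu' (j - l) (Suc l)" using e L restr_wof_str2[OF jl, of nu'] by simp
    then show ?thesis using t' by blast
  qed
  obtain mu0 nu0 xi0 where t0: "(mu0,nu0,xi0) \<in> full_beh Q" and e0: "str nu 0 l = str nu0 0 l"
  proof -
    have "restr w (int (l-1) - int l) (int (l-1)) \<in> Pi_l (Suc l) (beh Q)" using w4[of "int (l-1)"] by simp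
    then obtain mu0 nu0 xi0 j where t0: "(mu0,nu0,xi0) \<in> full_beh Q"
      and e: "restr (wof nu) (int (l-1) - int l) (int (l-1)) = restr (wof nu0) (int j - int l) (int j)"
      unfolding Pi_iff wn by blast
    have n1: "nat (int (l-1) - (int (l-1) - int l) + 1) = Suc l" by simp
    have n2: "nat (int j - (int j - int l) + 1) = Suc l" by simp
    have E: "wof nu (int (l-1) - int l + int i) = wof nu0 (int j - int l + int i)" if "i < Suc l" for i
    proof -
      have "restr (wof nu) (int (l-1) - int l) (int (l-1)) ! i = restr (wof nu0) (int j - int l) (int j) ! i"
        using e by simp
      then show ?thesis using that n1 n2 by (simp add: nth_restr)
    qed
    have "wof nu0 (int j - int l) = None" using E[of 0] l1 by (simp add: wof_def)
    then have j1: "int j < int l" by (simp add: wof_def split: if_splits)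
    have "wof nu0 (int j - int l + 1) \<noteq> None" using E[of 1] l1 by (simp add: wof_def split: if_splits)
    then have j2: "int j - int l + 1 \<ge> 0" by (simp add: wof_def split: if_splits)
    have jj: "j = l - 1" using j1 j2 by linarith
    have "str nu 0 l = str nu0 0 l"
    proof (rule nth_equalityI)
      show "length (str nu 0 l) = length (str nu0 0 l)" by simp
      fix i assume "i < length (str nu 0 l)"
      then have i: "i < l" by simp
      have A: "wof nu (int (l-1) - int l + int (Suc i)) = wof nu0 (int j - int l + int (Suc i))"
        by (rule E) (use i in simp)
      have eqs: "int (l-1) - int l + int (Suc i) = int i" "int j - int l + int (Suc i) = int i" using l1 jj by auto
      have "wof nu (int i) = wof nu0 (int i)" using A unfolding eqs .
      then have "nu i = nu0 i" by (simp add: wof_def)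
      then show "str nu 0 l ! i = str nu0 0 l ! i" using i by simp
    qed
    then show ?thesis using t0 that by blast
  qed
  define sg where "sg n = {str nu n l}" for n
  have step: "\<exists>u. u \<in> Us Q \<and> (sg n, u, nu n, sg (Suc n)) \<in> dlt (quotQ Q l) \<and> sg n \<in> Xs (quotQ Q l)" for n
  proof -
    obtain mu' nu' xi' j0 where t': "(mu',nu',xi') \<in> full_beh Q" and e: "str nu n (Suc l) = str nu' j0 (Suc l)"
      using W by blast
    have d: "(xi' j0, mu' j0, nu' j0, xi' (Suc j0)) \<in> dlt Q" and xX: "xi' j0 \<in> Xs Q" and uU: "mu' j0 \<in> Us Q"
      using traj_in[OF t', of j0] by auto
    have z1: "zx (xi' j0) = str nu n l"
    proof -
      have "zx (xi' j0) = str nu' j0 l" by (rule zx_traj[OF t'])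
      also have "\<dots> = take l (str nu' j0 (Suc l))" by (simp add: take_str)
      also have "\<dots> = take l (str nu n (Suc l))" using e by simp
      also have "\<dots> = str nu n l" by (simp add: take_str)
      finally show ?thesis .
    qed
    have z2: "zx (xi' (Suc j0)) = str nu (Suc n) l"
    proof -
      have "zx (xi' (Suc j0)) = str nu' (Suc j0) l" by (rule zx_traj[OF t'])
      also have "\<dots> = tl (str nu' j0 (Suc l))" by (simp add: tl_str)
      also have "\<dots> = tl (str nu n (Suc l))" using e by simp
      also have "\<dots> = str nu (Suc n) l" by (simp add: tl_str)
      finally show ?thesis .
    qed
    have "hd (str nu n (Suc l)) = hd (str nu' j0 (Suc l))" using e by simp
    then have yy: "nu' j0 = nu n" by (simp add: str_Suc)
    have "(sg n, mu' j0, nu n, sg (Suc n)) \<in> dlt (quotQ Q l)"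
      unfolding quot_dlt sg_def using d z1 z2 yy by metis
    moreover have "sg n \<in> Xs (quotQ Q l)" unfolding quotX sg_def using xX z1 by (metis image_eqI)
    ultimately show ?thesis using uU by blast
  qed
  then obtain mu where mu: "\<And>n. mu n \<in> Us Q \<and> (sg n, mu n, nu n, sg (Suc n)) \<in> dlt (quotQ Q l) \<and> sg n \<in> Xs (quotQ Q l)"
    by metis
  have x0: "xi0 0 \<in> X0s Q" using traj_in[OF t0, of 0] by simp
  have "sg 0 = {zx (xi0 0)}" using zx_traj[OF t0, of 0] e0 by (simp add: sg_def)
  then have s0: "sg 0 \<in> X0s (quotQ Q l)" unfolding quotX0 using x0 by blast
  have "(mu, nu, sg) \<in> full_beh (quotQ Q l)"
    unfolding full_beh_def using mu nuY s0 by (simp add: quot_simps)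
  then show ?thesis unfolding beh_iff wn by blast
qed

lemma part1: "beh (quotQ Q l) = salca Q l"
  using part1a part1b by blast

end

theorem proposition12:
  fixes Q :: "('x,'u,'y) sm" and l :: nat
  assumes "standing Q" and "l \<ge> 1" and "future_unique Q l l"
  shows "beh (quotQ Q l) = salca Q l
    \<and> simrel piY (absQ Q l l) (quotQ Q l)
        {(zeta,V). zeta \<in> Xs (absQ Q l l) \<and> V \<in> Xs (quotQ Q l) \<and> V = {zeta}}
    \<and> simrel piY (quotQ Q l) (absQ Q l l)
        ({(zeta,V). zeta \<in> Xs (absQ Q l l) \<and> V \<in> Xs (quotQ Q l) \<and> V = {zeta}}\<inverse>)
    \<and> (simrel piY (absQ Q l l) Q ({(x,xh). x \<in> Xs Q \<and> xh \<in> Xs (absQ Q l l) \<and> xh \<in> EI Q l l x}\<inverse>)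
        \<longleftrightarrow> simrel piY (quotQ Q l) Q ({(x,xh). x \<in> Xs Q \<and> xh \<in> Xs (quotQ Q l) \<and> xh = EI Q l l x}\<inverse>))
    \<and> (async_complete Q l l \<longleftrightarrow> Phi Q (l + 1) = Phi Q l)"
proof -
  interpret P12 Q l using assms by unfold_locales
  have i: "beh (quotQ Q l) = salca Q l" by (rule part1)
  have ii1: "simrel piY (absQ Q l l) (quotQ Q l)
        {(zeta,V). zeta \<in> Xs (absQ Q l l) \<and> V \<in> Xs (quotQ Q l) \<and> V = {zeta}}"
    using part2a unfolding RR_def .
  have ii2: "simrel piY (quotQ Q l) (absQ Q l l)
        ({(zeta,V). zeta \<in> Xs (absQ Q l l) \<and> V \<in> Xs (quotQ Q l) \<and> V = {zeta}}\<inverse>)"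
    using part2b unfolding RR_def .
  have iii: "simrel piY (absQ Q l l) Q ({(x,xh). x \<in> Xs Q \<and> xh \<in> Xs (absQ Q l l) \<and> xh \<in> EI Q l l x}\<inverse>)
        \<longleftrightarrow> simrel piY (quotQ Q l) Q ({(x,xh). x \<in> Xs Q \<and> xh \<in> Xs (quotQ Q l) \<and> xh = EI Q l l x}\<inverse>)"
    using part3a part3b unfolding R1_def R2_def by blast
  have iv: "async_complete Q l l \<longleftrightarrow> Phi Q (l + 1) = Phi Q l" by (rule part4)
  show ?thesis using i ii1 ii2 iii iv by blast
qed

end
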